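(* Let $D$ be a regular $(v,k,\lambda,\mu)$-PDS in a finite group $G$ with $0<\mu<k$, and assume $\sqrt\Delta$ is an integer. Let $\xi$ be a nonprincipal linear character of $G$ of prime order $p$ with kernel $N$. Then $p\mid k-\xi(D)$, \[|N\cap D|=\frac{k-\xi(D)}{p}+\xi(D),\] and $|Na\cap D|=\frac{k-\xi(D)}{p}$ for every $a\in G\setminus N$.
   Context: A $(v,k,\lambda,\mu)$-PDS in a group $G$ of order $v$ is a $k$-subset $D$ such that every nonidentity element of $D$ is $xy^{-1}$ ($x,y\in D$) in exactly $\lambda$ ways and every nonidentity element of $G\setminus D$ in exactly $\mu$ ways; regular means $D=D^{(-1)}$ and $1\notin D$. $\Delta=(\lambda-\mu)^2+4(k-\mu)$; $\chi(D)=\sum_{d\in D}\chi(d)$. *)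

theory Defs
  imports Complex_Main "HOL-Algebra.Coset" "HOL-Computational_Algebra.Primes"
begin

definition is_PDS :: "('a, 'b) monoid_scheme \<Rightarrow> 'a set \<Rightarrow> nat \<Rightarrow> nat \<Rightarrow> nat \<Rightarrow> nat \<Rightarrow> bool" where
  "is_PDS G D v k lam mu \<longleftrightarrow>
     D \<subseteq> carrier G \<and> card (carrier G) = v \<and> card D = k \<and>
     (\<forall>g \<in> carrier G. g \<noteq> \<one>\<^bsub>G\<^esub> \<longrightarrow>
        card {(x, y). x \<in> D \<and> y \<in> D \<and> x \<otimes>\<^bsub>G\<^esub> inv\<^bsub>G\<^esub> y = g}
          = (if g \<in> D then lam else mu))"

definition regular_PDS :: "('a, 'b) monoid_scheme \<Rightarrow> 'a set \<Rightarrow> nat \<Rightarrow> nat \<Rightarrow> nat \<Rightarrow> nat \<Rightarrow> bool" where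
  "regular_PDS G D v k lam mu \<longleftrightarrow>
     is_PDS G D v k lam mu \<and> (\<lambda>x. inv\<^bsub>G\<^esub> x) ` D = D \<and> \<one>\<^bsub>G\<^esub> \<notin> D"

definition PDS_Delta :: "nat \<Rightarrow> nat \<Rightarrow> nat \<Rightarrow> int" where
  "PDS_Delta k lam mu = (int lam - int mu)^2 + 4 * (int k - int mu)"

definition linear_char :: "('a, 'b) monoid_scheme \<Rightarrow> ('a \<Rightarrow> complex) \<Rightarrow> bool" where
  "linear_char G \<xi> \<longleftrightarrow>
     (\<forall>x \<in> carrier G. \<xi> x \<noteq> 0) \<and>
     (\<forall>x \<in> carrier G. \<forall>y \<in> carrier G. \<xi> (x \<otimes>\<^bsub>G\<^esub> y) = \<xi> x * \<xi> y)"

definition char_order :: "('a, 'b) monoid_scheme \<Rightarrow> ('a \<Rightarrow> complex) \<Rightarrow> nat" where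
  "char_order G \<xi> = (LEAST n. 0 < n \<and> (\<forall>x \<in> carrier G. \<xi> x ^ n = 1))"

definition char_kernel :: "('a, 'b) monoid_scheme \<Rightarrow> ('a \<Rightarrow> complex) \<Rightarrow> 'a set" where
  "char_kernel G \<xi> = {x \<in> carrier G. \<xi> x = 1}"

definition char_sum :: "('a \<Rightarrow> complex) \<Rightarrow> 'a set \<Rightarrow> complex" where
  "char_sum \<xi> D = (\<Sum>d\<in>D. \<xi> d)"

end

theory Submission
  imports Defs "Berlekamp_Zassenhaus.Factor_Bound"
begin



lemma eis_aux:
  fixes A B E :: "int poly" and q :: int
  assumes q: "prime q" and AB: "A * B = E" and E0: "coeff E 0 = q"
    and Ei: "\<forall>i<degree E. q dvd coeff E i" and El: "\<not> q dvd lead_coeff E"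
    and A0: "q dvd coeff A 0"
  shows "degree B = 0"
proof -
  have E0': "coeff A 0 * coeff B 0 = q" using AB E0 by (metis coeff_mult_0)
  have B0: "\<not> q dvd coeff B 0"
  proof
    assume "q dvd coeff B 0"
    with A0 have "q * q dvd q" using E0' by (metis mult_dvd_mono)
    hence "q * q dvd q * 1" by simp
    hence "q dvd 1" using q by (simp add: prime_imp_nonzero)
    with q show False using not_prime_unit by blast
  qed
  have Enz: "E \<noteq> 0" using El by auto
  hence Anz: "A \<noteq> 0" and Bnz: "B \<noteq> 0" using AB by auto
  have degE: "degree E = degree A + degree B" using AB Anz Bnz degree_mult_eq by metis
  have "lead_coeff E = lead_coeff A * lead_coeff B" using AB lead_coeff_mult by metis
  hence lA: "\<not> q dvd lead_coeff A" using El by auto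
  define r where "r = (LEAST i. \<not> q dvd coeff A i)"
  have r1: "\<not> q dvd coeff A r" unfolding r_def by (rule LeastI[of _ "degree A"], rule lA)
  have r2: "r \<le> degree A" unfolding r_def by (rule Least_le, rule lA)
  have r3: "q dvd coeff A i" if "i < r" for i using not_less_Least[OF that[unfolded r_def]] by auto
  have "coeff E r = (\<Sum>i\<le>r. coeff A i * coeff B (r - i))" using AB coeff_mult by metis
  also have "\<dots> = (\<Sum>i<r. coeff A i * coeff B (r - i)) + coeff A r * coeff B 0"
    by (simp add: lessThan_Suc_atMost[symmetric])
  finally have eq: "coeff E r = (\<Sum>i<r. coeff A i * coeff B (r - i)) + coeff A r * coeff B 0" .
  have d1: "q dvd (\<Sum>i<r. coeff A i * coeff B (r - i))"
    by (rule dvd_sum) (simp add: r3)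
  have "\<not> q dvd coeff A r * coeff B 0" using r1 B0 q prime_dvd_mult_iff by blast
  hence "\<not> q dvd coeff E r" using eq d1 by (metis dvd_add_right_iff)
  hence "\<not> r < degree E" using Ei by auto
  thus ?thesis using degE r2 by simp
qed

lemma eis:
  fixes A B E :: "int poly" and q :: int
  assumes q: "prime q" and AB: "A * B = E" and E0: "coeff E 0 = q"
    and Ei: "\<forall>i<degree E. q dvd coeff E i" and El: "\<not> q dvd lead_coeff E"
  shows "degree A = 0 \<or> degree B = 0"
proof -
  have "coeff A 0 * coeff B 0 = q" using AB E0 by (metis coeff_mult_0)
  hence "q dvd coeff A 0 \<or> q dvd coeff B 0" using q by (metis dvd_refl prime_dvd_mult_iff)
  thus ?thesis
  proof
    assume "q dvd coeff A 0" thus ?thesis using eis_aux[OF q AB E0 Ei El] by auto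
  next
    assume "q dvd coeff B 0" thus ?thesis using eis_aux[OF q _ E0 Ei El, of B A] AB
      by (auto simp: mult.commute)
  qed
qed

definition cyc :: "nat \<Rightarrow> 'a::comm_ring_1 poly" where
  "cyc n = (\<Sum>i<n. Polynomial.monom 1 i)"

lemma coeff_cyc: "coeff (cyc n) j = (if j < n then 1 else 0)"
  unfolding cyc_def by (simp add: coeff_sum coeff_monom)

lemma cyc_mult: "cyc n * [:-1, 1:] = Polynomial.monom 1 n - 1"
proof -
  have "cyc n * [:-1, 1:] = - cyc n + pCons 0 (cyc n)"
    by (simp add: mult_pCons_right)
  also have "\<dots> = Polynomial.monom 1 n - 1"
    by (rule poly_eqI) (auto simp: coeff_pCons coeff_cyc coeff_monom split: nat.split)
  finally show ?thesis .
qed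


lemma coeff_cycshift:
  "coeff ((cyc n :: 'a::comm_ring_1 poly) \<circ>\<^sub>p [:1, 1:]) j = of_nat (n choose Suc j)"
proof -
  define E where "E = (cyc n :: 'a poly) \<circ>\<^sub>p [:1, 1:]"
  have m: "Polynomial.monom (1::'a) n \<circ>\<^sub>p [:1, 1:] = [:1, 1:] ^ n"
  proof -
    have "Polynomial.monom (1::'a) n = [:0, 1:] ^ n" by (simp only: x_as_monom x_pow_n)
    thus ?thesis by (simp add: pcompose_hom.hom_power)
  qed
  have "(cyc n * [:-1, 1:]) \<circ>\<^sub>p [:1, 1:] = E * [:0, 1:]"
  proof -
    have "[:-1, 1:] \<circ>\<^sub>p [:1, 1:] = ([:0, 1:] :: 'a poly)" by (simp add: pcompose_pCons)
    thus ?thesis by (simp only: E_def pcompose_mult)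
  qed
  moreover have "(cyc n * [:-1, 1:]) \<circ>\<^sub>p [:1, 1:] = [:1, 1:] ^ n - (1 :: 'a poly)"
    by (simp only: cyc_mult pcompose_diff m) simp
  ultimately have eq: "E * [:0, 1:] = [:1, 1:] ^ n - 1" by metis
  have "coeff E j = coeff (E * [:0, 1:]) (Suc j)"
    by (simp add: mult_pCons_right)
  also have "\<dots> = coeff ([:1, 1:] ^ n) (Suc j)" by (simp only: eq) simp
  also have "\<dots> = of_nat (n choose Suc j)"
  proof (cases "Suc j \<le> n")
    case True thus ?thesis using coeff_linear_poly_power[of "Suc j" n "1::'a" 1] by simp
  next
    case False
    hence "coeff ([:1, 1:] ^ n :: 'a poly) (Suc j) = 0"
      using degree_linear_power[of "1::'a" n] by (intro coeff_eq_0) simp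
    thus ?thesis using False by (simp add: binomial_eq_0)
  qed
  finally show ?thesis unfolding E_def .
qed


lemma cyc_factor:
  assumes p: "prime p" and AB: "(cyc p :: int poly) = A * B"
  shows "degree A = 0 \<or> degree B = 0"
proof -
  define q :: "int poly" where "q = [:1, 1:]"
  define E :: "int poly" where "E = cyc p \<circ>\<^sub>p q"
  have cE: "coeff E j = int (p choose Suc j)" for j
    unfolding E_def q_def by (rule coeff_cycshift)
  have p1: "p \<ge> 2" using p prime_ge_2_nat by blast
  have degE: "degree E = p - 1"
  proof (rule antisym)
    show "degree E \<le> p - 1"
      by (rule degree_le) (auto simp: cE binomial_eq_0)
    show "p - 1 \<le> degree E"
      by (rule le_degree) (use p1 in \<open>simp add: cE\<close>)
  qed
  have Eeq: "(A \<circ>\<^sub>p q) * (B \<circ>\<^sub>p q) = E" unfolding E_def AB by (simp add: pcompose_mult)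
  have "degree (A \<circ>\<^sub>p q) = 0 \<or> degree (B \<circ>\<^sub>p q) = 0"
  proof (rule eis[OF _ Eeq])
    show "prime (int p)" using p by simp
    show "coeff E 0 = int p" by (simp add: cE)
    show "\<forall>i<degree E. int p dvd coeff E i"
    proof (intro allI impI)
      fix i assume "i < degree E"
      hence "Suc i < p" using degE by simp
      hence "p dvd (p choose Suc i)" using p by (intro dvd_choose_prime) auto
      thus "int p dvd coeff E i" by (simp add: cE)
    qed
    show "\<not> int p dvd lead_coeff E"
      using degE p1 p by (simp add: cE)
  qed
  moreover have "degree q = 1" by (simp add: q_def)
  ultimately show ?thesis by (simp add: degree_pcompose)
qed

interpretation ofrat_poly: map_poly_comm_ring_hom "of_rat :: rat \<Rightarrow> complex" ..

lemma ev_cyc: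
  fixes w :: complex
  assumes "w ^ p = 1" "w \<noteq> 1"
  shows "poly (map_poly of_rat (cyc p :: rat poly)) w = 0"
proof -
  have "poly (map_poly of_rat (cyc p :: rat poly)) w = (\<Sum>i<p. w ^ i)"
    unfolding cyc_def of_rat_hom.poly_map_poly_eval_poly of_rat_hom.eval_poly_sum
    by (simp add: of_rat_hom.eval_poly_monom)
  also have "\<dots> = 0" using assms by (simp add: geometric_sum)
  finally show ?thesis .
qed

lemma minpoly_deg:
  fixes w :: complex
  assumes p: "prime p" and w: "w ^ p = 1" "w \<noteq> 1"
    and P: "P \<noteq> 0" "poly (map_poly of_rat P) w = 0"
  shows "p - 1 \<le> degree P"
proof -
  define ev where "ev = (\<lambda>Q :: rat poly. poly (map_poly of_rat Q) w)"
  have evm: "ev (Q1 * Q2) = ev Q1 * ev Q2" for Q1 Q2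
    unfolding ev_def by (simp add: ofrat_poly.hom_mult)
  have eva: "ev (Q1 + Q2) = ev Q1 + ev Q2" for Q1 Q2
    unfolding ev_def by (simp add: ofrat_poly.hom_add)
  define S where "S = (\<lambda>d. \<exists>Q. Q \<noteq> 0 \<and> ev Q = 0 \<and> degree Q = d)"
  have SP: "S (degree P)" unfolding S_def ev_def using P by blast
  define n0 where "n0 = (LEAST d. S d)"
  have "S n0" unfolding n0_def by (rule LeastI[of S, OF SP])
  then obtain F where F: "F \<noteq> 0" "ev F = 0" "degree F = n0" unfolding S_def by blast
  have min: "n0 \<le> d" if "S d" for d unfolding n0_def by (rule Least_le, rule that)
  define C :: "rat poly" where "C = cyc p"
  have evC: "ev C = 0" unfolding ev_def C_def by (rule ev_cyc[OF w])
  have "C = C div F * F + C mod F" by simp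
  hence "ev C = ev (C div F) * ev F + ev (C mod F)" using evm eva by metis
  hence evr: "ev (C mod F) = 0" using evC F by simp
  have "C mod F = 0"
  proof (rule ccontr)
    assume nz: "C mod F \<noteq> 0"
    hence "degree (C mod F) < degree F" using F(1) degree_mod_less' by blast
    moreover have "S (degree (C mod F))" unfolding S_def using nz evr by blast
    ultimately show False using min F(3) by fastforce
  qed
  hence CF: "C = (C div F) * F" by (metis div_mult_mod_eq add_0_right)
  have CZ: "map_poly rat_of_int (cyc p) = C"
    unfolding C_def by (rule poly_eqI) (simp add: coeff_map_poly coeff_cyc)
  from rat_to_int_factor[OF trans[OF CZ CF]] obtain g' h' where
    gh: "(cyc p :: int poly) = g' * h'" "degree g' = degree (C div F)" "degree h' = degree F" by blast
  have "degree g' = 0 \<or> degree h' = 0" by (rule cyc_factor[OF p gh(1)])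
  hence "degree (C div F) = 0 \<or> degree F = 0" by (simp only: gh(2,3))
  moreover have "degree F \<noteq> 0"
  proof
    assume "degree F = 0"
    then obtain c where "F = [:c:]" by (metis degree_eq_zeroE)
    with F show False by (simp add: ev_def)
  qed
  ultimately have d0: "degree (C div F) = 0" by simp
  have Cnz: "C \<noteq> 0" using evC
  proof -
    have "coeff C 0 = 1" unfolding C_def using p prime_gt_0_nat by (simp add: coeff_cyc)
    thus ?thesis by auto
  qed
  have "degree C = p - 1"
  proof (rule antisym)
    show "degree C \<le> p - 1" unfolding C_def by (rule degree_le) (auto simp: coeff_cyc)
    show "p - 1 \<le> degree C" unfolding C_def
      by (rule le_degree) (use p prime_gt_0_nat in \<open>simp add: coeff_cyc\<close>)
  qed
  moreover have "degree C = degree (C div F) + degree F"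
    using CF Cnz F(1) by (metis degree_mult_eq mult_eq_0_iff)
  ultimately have "degree F = p - 1" using d0 by simp
  thus ?thesis using min[OF SP] F(3) by simp
qed


lemma roots_indep:
  fixes w :: complex and c :: "nat \<Rightarrow> int"
  assumes p: "prime p" and w: "w ^ p = 1" "w \<noteq> 1"
    and sum0: "(\<Sum>i<p. of_int (c i) * w ^ i) = 0"
  shows "\<forall>i<p. c i = c 0"
proof -
  have p2: "p \<ge> 2" using p prime_ge_2_nat by blast
  define a where "a = (\<lambda>i. rat_of_int (c i - c (p - 1)))"
  define P :: "rat poly" where "P = (\<Sum>i<p. Polynomial.monom (a i) i)"
  have cP: "coeff P j = (if j < p then a j else 0)" for j
    unfolding P_def by (simp add: coeff_sum coeff_monom)
  have "poly (map_poly of_rat P) w = (\<Sum>i<p. of_rat (a i) * w ^ i)"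
    unfolding P_def of_rat_hom.poly_map_poly_eval_poly of_rat_hom.eval_poly_sum
    by (simp add: of_rat_hom.eval_poly_monom)
  also have "\<dots> = (\<Sum>i<p. of_int (c i) * w ^ i) - of_int (c (p - 1)) * (\<Sum>i<p. w ^ i)"
  proof -
    have "(\<Sum>i<p. of_rat (a i) * w ^ i) = (\<Sum>i<p. of_int (c i) * w ^ i - of_int (c (p - 1)) * w ^ i)"
      by (rule sum.cong) (simp_all add: a_def of_rat_diff algebra_simps)
    thus ?thesis by (simp add: sum_subtractf sum_distrib_left)
  qed
  also have "\<dots> = 0" using sum0 w by (simp add: geometric_sum)
  finally have ev0: "poly (map_poly of_rat P) w = 0" .
  have "degree P \<le> p - 2"
  proof (rule degree_le, intro allI impI)
    fix i assume "p - 2 < i"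
    hence "i = p - 1 \<or> p \<le> i" using p2 by linarith
    thus "coeff P i = 0" by (auto simp: cP a_def)
  qed
  note dP = this
  have "P = 0"
  proof (rule ccontr)
    assume "P \<noteq> 0"
    from minpoly_deg[OF p w this ev0] have "p - 1 \<le> degree P" .
    with dP p2 show False by linarith
  qed
  hence cj: "c j = c (p - 1)" if "j < p" for j using cP[of j] that by (simp add: a_def)
  show ?thesis
  proof (intro allI impI)
    fix i assume "i < p"
    from cj[OF this] cj[of 0] p2 show "c i = c 0" by simp
  qed
qed



context group begin

lemma xi_one:
  assumes "linear_char G xi" shows "xi \<one> = 1"
proof -
  have "xi \<one> * 1 = xi \<one> * xi \<one>" using assms unfolding linear_char_def
    by (metis one_closed l_one mult_1_right)
  moreover have "xi \<one> \<noteq> 0" using assms unfolding linear_char_def by simp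
  ultimately show ?thesis by (metis mult_left_cancel)
qed

lemma xi_mult:
  assumes "linear_char G xi" "x \<in> carrier G" "y \<in> carrier G"
  shows "xi (x \<otimes> y) = xi x * xi y"
  using assms unfolding linear_char_def by blast

lemma xi_inv:
  assumes "linear_char G xi" "x \<in> carrier G"
  shows "xi (inv x) * xi x = 1"
  using xi_mult[OF assms(1) inv_closed[OF assms(2)] assms(2)] xi_one[OF assms(1)] assms(2)
  by simp

lemma xi_pow:
  assumes "linear_char G xi" "x \<in> carrier G"
  shows "xi (x [^] (n::nat)) = xi x ^ n"
proof (induction n)
  case 0 thus ?case using xi_one[OF assms(1)] by simp
next
  case (Suc n) thus ?case using xi_mult[OF assms(1) nat_pow_closed[OF assms(2)] assms(2), of n]
    by (simp add: nat_pow_Suc)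
qed

lemma xi_root:
  assumes lc: "linear_char G xi" and fin: "finite (carrier G)" and co: "char_order G xi = p"
  shows "0 < p \<and> (\<forall>x\<in>carrier G. xi x ^ p = 1)"
proof -
  let ?P = "\<lambda>n. 0 < n \<and> (\<forall>x\<in>carrier G. xi x ^ n = 1)"
  have "?P (Coset.order G)"
  proof
    show "0 < Coset.order G" unfolding Coset.order_def using fin one_closed card_gt_0_iff by blast
    show "\<forall>x\<in>carrier G. xi x ^ Coset.order G = 1"
      using xi_pow[OF lc] pow_order_eq_1 xi_one[OF lc] by metis
  qed
  hence "?P (LEAST n. ?P n)" by (rule LeastI)
  thus ?thesis using co unfolding char_order_def by simp
qed

lemma xi_sum0:
  assumes lc: "linear_char G xi" and fin: "finite (carrier G)" and y: "y \<in> carrier G" "xi y \<noteq> 1"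
  shows "(\<Sum>x\<in>carrier G. xi x) = 0"
proof -
  have "(\<Sum>x\<in>carrier G. xi x) = (\<Sum>x\<in>(\<otimes>) y ` carrier G. xi x)"
    using surj_const_mult[OF y(1)] by simp
  also have "\<dots> = (\<Sum>x\<in>carrier G. xi (y \<otimes> x))"
    using sum.reindex[OF inj_on_cmult[OF y(1)], of xi] by simp
  also have "\<dots> = xi y * (\<Sum>x\<in>carrier G. xi x)"
    by (simp add: sum_distrib_left xi_mult[OF lc y(1)])
  finally have "(1 - xi y) * (\<Sum>x\<in>carrier G. xi x) = 0" by (simp add: algebra_simps)
  thus ?thesis using y(2) by simp
qed


lemma pds_quadratic:
  assumes lc: "linear_char G xi" and fin: "finite (carrier G)"
    and y: "y \<in> carrier G" "xi y \<noteq> 1"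
    and reg: "regular_PDS G D v k lam mu"
  shows "char_sum xi D * char_sum xi D
         = of_nat k - of_nat mu + (of_nat lam - of_nat mu) * char_sum xi D"
proof -
  have DG: "D \<subseteq> carrier G" and cardD: "card D = k" and
    cnt: "\<And>g. g \<in> carrier G \<Longrightarrow> g \<noteq> \<one> \<Longrightarrow>
        card {(x, y). x \<in> D \<and> y \<in> D \<and> x \<otimes> inv y = g} = (if g \<in> D then lam else mu)"
    and invD: "(\<lambda>x. inv x) ` D = D" and oneD: "\<one> \<notin> D"
    using reg unfolding regular_PDS_def is_PDS_def by auto
  have finD: "finite D" using DG fin finite_subset by blast
  define S where "S = char_sum xi D"
  have S_def': "S = (\<Sum>d\<in>D. xi d)" unfolding S_def char_sum_def ..
  have injinv: "inj_on (\<lambda>x. inv x) D" using inv_inj DG inj_on_subset by blast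
  have sumInv: "(\<Sum>y\<in>D. xi (inv y)) = S"
    using sum.reindex[OF injinv, of xi] invD S_def' by simp
  have "S * S = (\<Sum>x\<in>D. \<Sum>y\<in>D. xi x * xi (inv y))"
    by (subst (2) sumInv[symmetric]) (simp add: S_def' sum_product)
  also have "\<dots> = (\<Sum>x\<in>D. \<Sum>y\<in>D. xi (x \<otimes> inv y))"
    using DG by (intro sum.cong refl) (metis subsetD inv_closed xi_mult[OF lc])
  also have "\<dots> = (\<Sum>z\<in>D \<times> D. xi (fst z \<otimes> inv (snd z)))"
    by (simp add: sum.cartesian_product split_def)
  also have "\<dots> = (\<Sum>g\<in>carrier G. \<Sum>z\<in>{z \<in> D \<times> D. fst z \<otimes> inv (snd z) = g}. xi (fst z \<otimes> inv (snd z)))"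
    by (rule sum.group[symmetric]) (use finD fin DG in \<open>auto intro!: m_closed inv_closed\<close>)
  also have "\<dots> = (\<Sum>g\<in>carrier G. of_nat (card {(x, y). x \<in> D \<and> y \<in> D \<and> x \<otimes> inv y = g}) * xi g)"
  proof (rule sum.cong[OF refl])
    fix g assume "g \<in> carrier G"
    have e: "{z \<in> D \<times> D. fst z \<otimes> inv (snd z) = g} = {(x, y). x \<in> D \<and> y \<in> D \<and> x \<otimes> inv y = g}"
      by auto
    show "(\<Sum>z\<in>{z \<in> D \<times> D. fst z \<otimes> inv (snd z) = g}. xi (fst z \<otimes> inv (snd z))) =
      of_nat (card {(x, y). x \<in> D \<and> y \<in> D \<and> x \<otimes> inv y = g}) * xi g"
      unfolding e[symmetric] by simp
  qed
  finally have SS: "S * S = (\<Sum>g\<in>carrier G. of_nat (card {(x, y). x \<in> D \<and> y \<in> D \<and> x \<otimes> inv y = g}) * xi g)" .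
  have c1: "card {(x, y). x \<in> D \<and> y \<in> D \<and> x \<otimes> inv y = \<one>} = k"
  proof -
    have "{(x, y). x \<in> D \<and> y \<in> D \<and> x \<otimes> inv y = \<one>} = (\<lambda>x. (x, x)) ` D"
    proof (safe)
      fix x y assume xy: "x \<in> D" "y \<in> D" "x \<otimes> inv y = \<one>"
      have xG: "x \<in> carrier G" and yG: "y \<in> carrier G" using xy DG by auto
      have "inv (inv y) = x" by (rule inv_equality) (use xy xG yG in auto)
      hence "x = y" using yG by simp
      thus "(x, y) \<in> (\<lambda>x. (x, x)) ` D" using xy by auto
    next
      fix x assume "x \<in> D" thus "x \<otimes> inv x = \<one>" using DG by auto
    qed
    moreover have "inj_on (\<lambda>x. (x, x)) D" by (auto simp: inj_on_def)
    ultimately show ?thesis using cardD by (simp add: card_image)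
  qed
  have oneG: "\<one> \<in> carrier G" by simp
  have "S * S = of_nat k * xi \<one> + (\<Sum>g\<in>carrier G - {\<one>}. of_nat (if g \<in> D then lam else mu) * xi g)"
  proof -
    have "S * S = of_nat (card {(x, y). x \<in> D \<and> y \<in> D \<and> x \<otimes> inv y = \<one>}) * xi \<one>
       + (\<Sum>g\<in>carrier G - {\<one>}. of_nat (card {(x, y). x \<in> D \<and> y \<in> D \<and> x \<otimes> inv y = g}) * xi g)"
      unfolding SS by (rule sum.remove[OF fin oneG])
    also have "(\<Sum>g\<in>carrier G - {\<one>}. of_nat (card {(x, y). x \<in> D \<and> y \<in> D \<and> x \<otimes> inv y = g}) * xi g)
       = (\<Sum>g\<in>carrier G - {\<one>}. of_nat (if g \<in> D then lam else mu) * xi g)"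
    proof (rule sum.cong[OF refl])
      fix g assume "g \<in> carrier G - {\<one>}"
      hence "g \<in> carrier G" "g \<noteq> \<one>" by auto
      from cnt[OF this] show "of_nat (card {(x, y). x \<in> D \<and> y \<in> D \<and> x \<otimes> inv y = g}) * xi g
         = of_nat (if g \<in> D then lam else mu) * xi g" by (simp only:)
    qed
    finally show ?thesis by (simp only: c1)
  qed
  also have "(\<Sum>g\<in>carrier G - {\<one>}. of_nat (if g \<in> D then lam else mu) * xi g)
      = of_nat lam * (\<Sum>g\<in>D. xi g) + of_nat mu * (\<Sum>g\<in>carrier G - {\<one>} - D. xi g)"
  proof -
    have "(\<Sum>g\<in>carrier G - {\<one>}. of_nat (if g \<in> D then lam else mu) * xi g)
        = (\<Sum>g\<in>carrier G - {\<one>}. if g \<in> D then of_nat lam * xi g else of_nat mu * xi g)"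
      by (intro sum.cong) auto
    also have "\<dots> = (\<Sum>g\<in>(carrier G - {\<one>}) \<inter> {g. g \<in> D}. of_nat lam * xi g)
        + (\<Sum>g\<in>(carrier G - {\<one>}) \<inter> - {g. g \<in> D}. of_nat mu * xi g)"
      by (rule sum.If_cases) (use fin in simp)
    also have "(carrier G - {\<one>}) \<inter> {g. g \<in> D} = D" using DG oneD by auto
    also have "(carrier G - {\<one>}) \<inter> - {g. g \<in> D} = carrier G - {\<one>} - D" by auto
    finally show ?thesis by (simp add: sum_distrib_left)
  qed
  also have "(\<Sum>g\<in>carrier G - {\<one>} - D. xi g) = - 1 - S"
  proof -
    have "(\<Sum>g\<in>carrier G. xi g) = xi \<one> + (\<Sum>g\<in>carrier G - {\<one>}. xi g)"
      by (rule sum.remove[OF fin oneG])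
    moreover have "(\<Sum>g\<in>carrier G - {\<one>}. xi g) = (\<Sum>g\<in>carrier G - {\<one>} - D. xi g) + (\<Sum>g\<in>D. xi g)"
      by (rule sum.subset_diff) (use DG oneD fin in auto)
    ultimately have "1 + (S + (\<Sum>g\<in>carrier G - {\<one>} - D. xi g)) = 0"
      using xi_sum0[OF lc fin y] xi_one[OF lc] S_def' by (simp add: algebra_simps)
    thus ?thesis by (simp add: eq_diff_eq add_eq_0_iff algebra_simps)
  qed
  finally have "S * S = of_nat k + of_nat lam * S + of_nat mu * (- 1 - S)"
    using xi_one[OF lc] S_def' by simp
  thus ?thesis unfolding S_def by (simp add: algebra_simps)
qed


lemma char_sum_int:
  assumes lc: "linear_char G xi" and fin: "finite (carrier G)"
    and y: "y \<in> carrier G" "xi y \<noteq> 1"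
    and reg: "regular_PDS G D v k lam mu" and muk: "mu < k"
    and sq: "sqrt (real_of_int (PDS_Delta k lam mu)) \<in> \<int>"
  shows "\<exists>m::int. char_sum xi D = of_int m"
proof -
  define S where "S = char_sum xi D"
  define l where "l = int lam - int mu"
  define Dl where "Dl = PDS_Delta k lam mu"
  have Dl: "Dl = l ^ 2 + 4 * (int k - int mu)" unfolding Dl_def l_def PDS_Delta_def by simp
  have Dpos: "Dl \<ge> 0" using muk Dl by simp
  from sq obtain t where t: "sqrt (real_of_int Dl) = real_of_int t" unfolding Dl_def
    by (metis Ints_cases)
  have "real_of_int (t ^ 2) = real_of_int Dl"
    using t Dpos by (metis of_int_power of_int_0_le_iff real_sqrt_pow2)
  hence t2: "t ^ 2 = l ^ 2 + 4 * (int k - int mu)" using Dl of_int_eq_iff by metis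
  have "even t \<longleftrightarrow> even l"
  proof -
    have "even (t ^ 2) \<longleftrightarrow> even (l ^ 2)" using t2 by simp
    thus ?thesis by simp
  qed
  hence ev1: "even (l + t)" and ev2: "even (l - t)" by auto
  have Q: "S * S = of_nat k - of_nat mu + (of_nat lam - of_nat mu) * S"
    unfolding S_def by (rule pds_quadratic[OF lc fin y reg])
  have "(2 * S - of_int l) ^ 2 = of_int (t ^ 2)"
  proof -
    have "(2 * S - of_int l) ^ 2 = 4 * (S * S - of_int l * S) + of_int l ^ 2"
      by (simp add: power2_eq_square algebra_simps)
    also have "S * S - of_int l * S = of_nat k - of_nat mu" using Q by (simp add: l_def algebra_simps)
    finally show ?thesis unfolding t2 using muk by (simp add: algebra_simps of_nat_diff)
  qed
  hence "(2 * S - of_int l - of_int t) * (2 * S - of_int l - of_int (- t)) = 0"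
    by (simp add: power2_eq_square algebra_simps)
  hence "2 * S - of_int l - of_int t = 0 \<or> 2 * S - of_int l - of_int (- t) = 0"
    by (rule mult_eq_0_iff[THEN iffD1])
  hence "2 * S = of_int l + of_int t \<or> 2 * S = of_int l + of_int (- t)"
    by (simp only: diff_eq_eq add_0_left add.commute)
  hence "2 * S = of_int (l + t) \<or> 2 * S = of_int (l - t)"
    by simp
  thus ?thesis
  proof
    assume h: "2 * S = of_int (l + t)"
    from ev1 obtain m where "l + t = 2 * m" by blast
    hence "S = of_int m" using h by simp
    thus ?thesis unfolding S_def by blast
  next
    assume h: "2 * S = of_int (l - t)"
    from ev2 obtain m where "l - t = 2 * m" by blast
    hence "S = of_int m" using h by simp
    thus ?thesis unfolding S_def by blast
  qed
qed


lemma main_in: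
  assumes fin: "finite (carrier G)"
    and reg: "regular_PDS G D v k lam mu"
    and muk: "mu < k"
    and sq: "sqrt (real_of_int (PDS_Delta k lam mu)) \<in> \<int>"
    and lc: "linear_char G xi"
    and ex: "\<exists>x \<in> carrier G. xi x \<noteq> 1"
    and p: "prime p" and co: "char_order G xi = p"
  shows "\<exists>m::int. char_sum xi D = of_int m \<and> int p dvd (int k - m) \<and>
           int (card (char_kernel G xi \<inter> D)) = (int k - m) div int p + m \<and>
           (\<forall>a \<in> carrier G - char_kernel G xi.
              int (card ((char_kernel G xi #> a) \<inter> D)) = (int k - m) div int p)"
proof -
  from ex obtain y where y: "y \<in> carrier G" "xi y \<noteq> 1" by blast
  have DG: "D \<subseteq> carrier G" and cardD: "card D = k"
    using reg unfolding regular_PDS_def is_PDS_def by auto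
  have finD: "finite D" using DG fin finite_subset by blast
  from char_sum_int[OF lc fin y reg muk sq] obtain m where m: "char_sum xi D = of_int m" by blast
  have p0: "0 < p" and root: "\<And>x. x \<in> carrier G \<Longrightarrow> xi x ^ p = 1"
    using xi_root[OF lc fin co] by auto
  define w where "w = xi y"
  have w1: "w ^ p = 1" and w2: "w \<noteq> 1" using root[OF y(1)] y(2) by (auto simp: w_def)
  have w0: "w \<noteq> 0" using w1 p0 by (metis power_0_left less_not_refl zero_neq_one)
  have inj: "inj_on (\<lambda>i. w ^ i) {..<p}"
  proof (rule inj_onI, rule ccontr)
    fix i j assume ij: "i \<in> {..<p}" "j \<in> {..<p}" "w ^ i = w ^ j" "i \<noteq> j"
    have main: "False" if ab: "a < b" "b < p" "w ^ a = w ^ b" for a b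
    proof -
      define d where "d = b - a"
      have d: "0 < d" "d < p" using ab(1,2) unfolding d_def by auto
      have bad: "b = a + d" using ab(1) unfolding d_def by arith
      have wb: "w ^ b = w ^ a * w ^ d" by (simp only: bad power_add)
      have waa: "w ^ a = w ^ a * w ^ d" by (rule trans[OF ab(3) wb])
      have wa0: "w ^ a \<noteq> 0" using w0 by simp
      have wd: "w ^ d = 1" using mult_cancel_left1[of "w ^ a" "w ^ d"] waa wa0 by blast
      have "\<not> p dvd d" using d by (auto dest: dvd_imp_le)
      hence "algebraic_semidom_class.coprime p d" by (rule prime_imp_coprime[OF p])
      hence "gcd p d = 1" by (simp only: coprime_iff_gcd_eq_1)
      hence "gcd d p = 1" by (simp only: gcd.commute)
      from bezout_nat[of d p] d obtain x z where "d * x = p * z + gcd d p" by auto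
      hence xz: "d * x = p * z + 1" using \<open>gcd d p = 1\<close> by simp
      have "w ^ (d * x) = 1" using wd by (simp add: power_mult)
      moreover have "w ^ (p * z + 1) = w" using w1 by (simp add: power_mult)
      ultimately show False using xz w2 by simp
    qed
    show False
    proof (cases "i < j")
      case True thus ?thesis using main[of i j] ij by auto
    next
      case False hence "j < i" using ij by auto
      thus ?thesis using main[of j i] ij by auto
    qed
  qed
  have roots: "{z. z ^ p = 1} = (\<lambda>i. w ^ i) ` {..<p}"
  proof (rule card_subset_eq[symmetric])
    show "finite {z::complex. z ^ p = 1}" using p0 by (intro finite_roots_unity) simp
    show "(\<lambda>i. w ^ i) ` {..<p} \<subseteq> {z. z ^ p = 1}"
      using w1 by (auto simp: power_mult[symmetric] mult.commute[of _ p] power_mult)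
    show "card ((\<lambda>i. w ^ i) ` {..<p}) = card {z::complex. z ^ p = 1}"
      using card_image[OF inj] card_roots_unity_eq[OF p0] by simp
  qed
  have exj: "\<exists>j<p. xi x = w ^ j" if "x \<in> carrier G" for x
  proof -
    have "xi x \<in> {z. z ^ p = 1}" using root[OF that] by simp
    thus ?thesis unfolding roots by auto
  qed
  define idx where "idx = (\<lambda>x. SOME j. j < p \<and> xi x = w ^ j)"
  have idx: "idx x < p \<and> xi x = w ^ idx x" if "x \<in> carrier G" for x
    unfolding idx_def by (rule someI_ex) (use exj[OF that] in blast)
  have idx_iff: "xi x = w ^ j \<longleftrightarrow> idx x = j" if "x \<in> carrier G" "j < p" for x j
    using idx[OF that(1)] that(2) inj by (auto simp: inj_on_def)
  define n where "n = (\<lambda>j. card {d \<in> D. idx d = j})"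
  have img: "idx ` D \<subseteq> {..<p}" using idx DG by auto
  have kn: "k = (\<Sum>j<p. n j)"
  proof -
    have "(\<Sum>j<p. \<Sum>d\<in>{d \<in> D. idx d = j}. (1::nat)) = (\<Sum>d\<in>D. 1)"
      by (rule sum.group[OF finD _ img]) simp
    thus ?thesis using cardD unfolding n_def by simp
  qed
  have Sn: "char_sum xi D = (\<Sum>j<p. of_nat (n j) * w ^ j)"
  proof -
    have "(\<Sum>j<p. \<Sum>d\<in>{d \<in> D. idx d = j}. xi d) = (\<Sum>d\<in>D. xi d)"
      by (rule sum.group[OF finD _ img]) simp
    moreover have "(\<Sum>d\<in>{d \<in> D. idx d = j}. xi d) = of_nat (n j) * w ^ j" for j
    proof -
      have "(\<Sum>d\<in>{d \<in> D. idx d = j}. xi d) = (\<Sum>d\<in>{d \<in> D. idx d = j}. w ^ j)"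
        using idx DG by (intro sum.cong refl) auto
      thus ?thesis unfolding n_def by simp
    qed
    ultimately show ?thesis unfolding char_sum_def by simp
  qed
  define c where "c = (\<lambda>j. int (n j) - (if j = 0 then m else 0))"
  have "(\<Sum>j<p. of_int (c j) * w ^ j) = (\<Sum>j<p. of_nat (n j) * w ^ j) - (\<Sum>j<p. (if j = 0 then of_int m else 0))"
    unfolding sum_subtractf[symmetric] by (intro sum.cong refl) (auto simp: c_def)
  also have "(\<Sum>j<p. (if j = 0 then (of_int m :: complex) else 0)) = of_int m"
    using p0 by (simp add: sum.delta)
  finally have "(\<Sum>j<p. of_int (c j) * w ^ j) = 0" using Sn m by simp
  from roots_indep[OF p w1 w2 this] have cc: "\<And>j. j < p \<Longrightarrow> c j = c 0" by blast
  have "int k = (\<Sum>j<p. int (n j))" using kn by simp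
  also have "\<dots> = (\<Sum>j<p. c 0 + (if j = 0 then m else 0))"
  proof (rule sum.cong[OF refl])
    fix j assume "j \<in> {..<p}"
    hence cj: "c j = c 0" using cc[of j] by simp
    have "int (n j) = c j + (if j = 0 then m else 0)" by (simp add: c_def)
    thus "int (n j) = c 0 + (if j = 0 then m else 0)" by (simp only: cj)
  qed
  also have "\<dots> = int p * c 0 + m" using p0 by (simp add: sum.distrib sum.delta)
  finally have kc: "int k - m = int p * c 0" by simp
  have dv: "int p dvd (int k - m)" using kc by simp
  have dq: "(int k - m) div int p = c 0" using kc p0 by simp
  have ker: "char_kernel G xi \<inter> D = {d \<in> D. idx d = 0}"
    using DG idx_iff[OF _ p0] unfolding char_kernel_def by auto
  have k0: "int (card (char_kernel G xi \<inter> D)) = c 0 + m"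
    unfolding ker using c_def n_def by simp
  have cos: "int (card ((char_kernel G xi #> a) \<inter> D)) = c 0"
    if a: "a \<in> carrier G - char_kernel G xi" for a
  proof -
    have aG: "a \<in> carrier G" using a by simp
    have "xi a \<noteq> 1" using a unfolding char_kernel_def by auto
    hence ja: "idx a \<noteq> 0" using idx[OF aG] by (metis power_0)
    have ja': "idx a < p" using idx[OF aG] by simp
    have "(char_kernel G xi #> a) \<inter> D = {d \<in> D. idx d = idx a}"
    proof (safe)
      fix d assume d: "d \<in> char_kernel G xi #> a" "d \<in> D"
      then obtain h where h: "h \<in> char_kernel G xi" "d = h \<otimes> a" unfolding r_coset_def by auto
      have "xi d = xi a" using h aG xi_mult[OF lc, of h a] unfolding char_kernel_def by auto
      thus "idx d = idx a" using idx[OF aG] idx_iff[of d "idx a"] d(2) DG ja' by auto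
    next
      fix d assume d: "d \<in> D" "idx d = idx a"
      have dG: "d \<in> carrier G" using d DG by auto
      have xd: "xi d = xi a" using idx[OF dG] idx[OF aG] d(2) by simp
      define h where "h = d \<otimes> inv a"
      have hG: "h \<in> carrier G" unfolding h_def using dG aG by simp
      have "xi h = xi d * xi (inv a)" unfolding h_def using xi_mult[OF lc dG inv_closed[OF aG]] .
      also have "\<dots> = 1" using xd xi_inv[OF lc aG] by (simp add: mult.commute)
      finally have "h \<in> char_kernel G xi" using hG unfolding char_kernel_def by simp
      moreover have "d = h \<otimes> a" unfolding h_def using dG aG by (simp add: m_assoc)
      ultimately show "d \<in> char_kernel G xi #> a" unfolding r_coset_def by auto
    qed
    hence "card ((char_kernel G xi #> a) \<inter> D) = n (idx a)" unfolding n_def by simp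
    thus ?thesis using cc[OF ja'] ja c_def by simp
  qed
  show ?thesis
  proof (intro exI[of _ m] conjI ballI)
    show "char_sum xi D = of_int m" by (rule m)
    show "int p dvd (int k - m)" by (rule dv)
    show "int (card (char_kernel G xi \<inter> D)) = (int k - m) div int p + m"
      unfolding dq by (rule k0)
    fix a assume "a \<in> carrier G - char_kernel G xi"
    from cos[OF this] show "int (card ((char_kernel G xi #> a) \<inter> D)) = (int k - m) div int p"
      unfolding dq .
  qed
qed

end


theorem mainTheorem3:
  fixes G :: "('a, 'b) monoid_scheme" and D :: "'a set" and v k lam mu p :: nat
    and \<xi> :: "'a \<Rightarrow> complex"
  assumes "group G" and "finite (carrier G)"
    and "regular_PDS G D v k lam mu"
    and "0 < mu" and "mu < k"
    and "sqrt (real_of_int (PDS_Delta k lam mu)) \<in> \<int>"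
    and "linear_char G \<xi>"
    and "\<exists>x \<in> carrier G. \<xi> x \<noteq> 1"
    and "prime p" and "char_order G \<xi> = p"
  shows "\<exists>m::int. char_sum \<xi> D = of_int m \<and> int p dvd (int k - m) \<and>
           int (card (char_kernel G \<xi> \<inter> D)) = (int k - m) div int p + m \<and>
           (\<forall>a \<in> carrier G - char_kernel G \<xi>.
              int (card ((char_kernel G \<xi> #>\<^bsub>G\<^esub> a) \<inter> D)) = (int k - m) div int p)"
  using group.main_in[OF assms(1) assms(2) assms(3) assms(5) assms(6) assms(7) assms(8) assms(9) assms(10)] .

end
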